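(* Let $2\le k\le n-1$, let $v_1,\dots,v_n$ be a basis of $\mathbb{C}^n$, let $i\in\{2,\dots,k\}$, $j\in\{k+1,\dots,n\}$, $h\in\{2,\dots,n\}$, and $a,b\in\mathbb{C}\setminus\{0\}$, and set $$t=a\,v_1\wedge\dots\wedge v_{i-1}\wedge v_j\wedge v_{i+1}\wedge\dots\wedge v_k\otimes v_1+b\,(v_1\wedge\dots\wedge v_k\otimes v_h+v_h\wedge v_2\wedge\dots\wedge v_k\otimes v_1).$$ Then: (i) if $h\in\{2,\dots,k\}$ (so $v_h\in\langle v_2,\dots,v_k\rangle$ and $v_h,v_j$ are not proportional), $t$ has $(2,1^{k-1})$-rank $2$; (ii) if $h\in\{k+1,\dots,n\}$ and $h\neq j$, $t$ has $(2,1^{k-1})$-rank $3$; (iii) if $h=j$, $t$ has $(2,1^{k-1})$-rank $2$.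
   Context: $\mathbb{S}_{(2,1^{k-1})}\mathbb{C}^n\subset\bigwedge^k\mathbb{C}^n\otimes\mathbb{C}^n$ is the Schur module of the partition $(2,1,\dots,1)$ ($k$ parts), the image of the Young symmetrizer (row symmetrization then column antisymmetrization, tableau filled column by column). An element has $(2,1^{k-1})$-rank $1$ if it equals $w_1\wedge\dots\wedge w_k\otimes w_1$ with $w_1,\dots,w_k$ linearly independent; the $(2,1^{k-1})$-rank of $t$ is the least $r$ such that $t$ is a sum of $r$ such elements. *)

theory Defs
  imports "HOL-Analysis.Analysis"
begin

text \<open>Vectors of C^n are elements of complex^'n with n = CARD('n).
  Tensors in (C^n)^{\<otimes>(k+1)} are coefficient functions on multi-indices
  I :: nat \<Rightarrow> 'n, where positions 1..k are the wedge factors and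
  position k+1 is the last tensor factor (other positions are ignored).\<close>

definition wedge :: "nat \<Rightarrow> (nat \<Rightarrow> complex^'n) \<Rightarrow> (nat \<Rightarrow> 'n) \<Rightarrow> complex" where
  "wedge k w = (\<lambda>I. \<Sum>p | p permutes {1..k}. of_int (sign p) * (\<Prod>b\<in>{1..k}. w (p b) $ I b))"

definition tens :: "nat \<Rightarrow> ((nat \<Rightarrow> 'n) \<Rightarrow> complex) \<Rightarrow> complex^'n \<Rightarrow> (nat \<Rightarrow> 'n) \<Rightarrow> complex" where
  "tens k T x = (\<lambda>I. T I * x $ I (Suc k))"

definition indep_fam :: "nat \<Rightarrow> (nat \<Rightarrow> complex^'n) \<Rightarrow> bool" where
  "indep_fam k w \<longleftrightarrow> inj_on w {1..k} \<and> vec.independent (w ` {1..k})"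

definition rk1 :: "nat \<Rightarrow> (nat \<Rightarrow> complex^'n) \<Rightarrow> (nat \<Rightarrow> 'n) \<Rightarrow> complex" where
  "rk1 k w = tens k (wedge k w) (w 1)"

definition hook_rank :: "nat \<Rightarrow> ((nat \<Rightarrow> 'n::finite) \<Rightarrow> complex) \<Rightarrow> nat" where
  "hook_rank k t = (LEAST r. \<exists>ws :: nat \<Rightarrow> nat \<Rightarrow> complex^'n::finite.
      (\<forall>m<r. indep_fam k (ws m)) \<and> t = (\<lambda>I. \<Sum>m<r. rk1 k (ws m) I))"

definition tT :: "nat \<Rightarrow> (nat \<Rightarrow> complex^'n) \<Rightarrow> complex \<Rightarrow> complex \<Rightarrow> nat \<Rightarrow> nat \<Rightarrow> nat
    \<Rightarrow> (nat \<Rightarrow> 'n) \<Rightarrow> complex" where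
  "tT k v a b i j h = (\<lambda>I.
      a * tens k (wedge k (v(i := v j))) (v 1) I
    + b * (tens k (wedge k v) (v h) I + tens k (wedge k (v(1 := v h))) (v 1) I))"

end

theory Submission
  imports Defs
begin
definition altS :: "nat set \<Rightarrow> (nat \<Rightarrow> nat \<Rightarrow> complex) \<Rightarrow> complex" where
  "altS A f = (\<Sum>p | p permutes A. of_int (sign p) * (\<Prod>b\<in>A. f b (p b)))"

lemma wedge_alt: "wedge k w I = altS {1..k} (\<lambda>b c. w c $ I b)"
  unfolding wedge_def altS_def by simp

lemma alt_cong:
  assumes "\<And>b c. b \<in> A \<Longrightarrow> c \<in> A \<Longrightarrow> f b c = g b c"
  shows "altS A f = altS A g"
  unfolding altS_def
proof (rule sum.cong[OF refl])
  fix p assume "p \<in> {p. p permutes A}"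
  then have "p permutes A" by simp
  then have "\<And>b. b \<in> A \<Longrightarrow> p b \<in> A" by (simp add: permutes_in_image)
  then show "of_int (sign p) * (\<Prod>b\<in>A. f b (p b)) = of_int (sign p) * (\<Prod>b\<in>A. g b (p b))"
    using assms by (metis (no_types, lifting) prod.cong)
qed

lemma alt_zero_row:
  assumes "finite A" "b0 \<in> A" "\<And>c. c \<in> A \<Longrightarrow> f b0 c = 0"
  shows "altS A f = 0"
  unfolding altS_def
proof (rule sum.neutral, clarify)
  fix p assume p: "p permutes A"
  have "f b0 (p b0) = 0" using assms p by (simp add: permutes_in_image)
  then have "(\<Prod>b\<in>A. f b (p b)) = 0" using assms(1,2) by (metis prod_zero_iff)
  then show "of_int (sign p) * (\<Prod>b\<in>A. f b (p b)) = 0" by simp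
qed

lemma alt_diag:
  assumes "finite A" "\<And>b c. b \<in> A \<Longrightarrow> c \<in> A \<Longrightarrow> b \<noteq> c \<Longrightarrow> f b c = 0"
  shows "altS A f = (\<Prod>b\<in>A. f b b)"
proof -
  have fin: "finite {p. p permutes A}" using assms(1) finite_permutations by blast
  have idin: "id \<in> {p. p permutes A}" by (simp add: permutes_id)
  have z: "of_int (sign p) * (\<Prod>b\<in>A. f b (p b)) = 0" if "p \<in> {p. p permutes A} - {id}" for p
  proof -
    from that have p: "p permutes A" "p \<noteq> id" by auto
    then obtain b where b: "p b \<noteq> b" by (metis eq_id_iff)
    then have "b \<in> A" using p(1) permutes_not_in by metis
    then have "f b (p b) = 0" using assms(2) b p(1) by (simp add: permutes_in_image)
    then show ?thesis using \<open>b \<in> A\<close> assms(1) by (metis mult_zero_right prod_zero_iff)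
  qed
  have "altS A f = of_int (sign (id::nat\<Rightarrow>nat)) * (\<Prod>b\<in>A. f b (id b))
      + (\<Sum>p\<in>{p. p permutes A} - {id}. of_int (sign p) * (\<Prod>b\<in>A. f b (p b)))"
    unfolding altS_def by (rule sum.remove[OF fin idin])
  also have "\<dots> = (\<Prod>b\<in>A. f b b)" using z by (simp add: sign_id)
  finally show ?thesis .
qed

lemma alt_eq_cols:
  assumes "finite A" "c1 \<in> A" "c2 \<in> A" "c1 \<noteq> c2" "\<And>b. b \<in> A \<Longrightarrow> f b c1 = f b c2"
  shows "altS A f = 0"
proof -
  let ?t = "Transposition.transpose c1 c2"
  have tp: "?t permutes A" using assms by (simp add: permutes_swap_id)
  have ft: "f b (?t c) = f b c" if "b \<in> A" for b c
    using assms(5)[OF that] by (cases "c = c1"; cases "c = c2") auto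
  have "altS A f = (\<Sum>p | p permutes A. of_int (sign (?t \<circ> p)) * (\<Prod>b\<in>A. f b ((?t \<circ> p) b)))"
    unfolding altS_def by (rule setum_permutations_compose_left[OF tp])
  also have "\<dots> = (\<Sum>p | p permutes A. - (of_int (sign p) * (\<Prod>b\<in>A. f b (p b))))"
  proof (rule sum.cong[OF refl])
    fix p assume "p \<in> {p. p permutes A}"
    then have p: "p permutes A" by simp
    have "sign (?t \<circ> p) = sign ?t * sign p"
      by (rule sign_compose) (use p assms(1) tp in \<open>auto intro: permutes_imp_permutation\<close>)
    then have s: "sign (?t \<circ> p) = - sign p" using assms(4) by (simp add: sign_swap_id)
    have "(\<Prod>b\<in>A. f b ((?t \<circ> p) b)) = (\<Prod>b\<in>A. f b (p b))"
      by (rule prod.cong) (auto simp: ft)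
    then show "of_int (sign (?t \<circ> p)) * (\<Prod>b\<in>A. f b ((?t \<circ> p) b)) = - (of_int (sign p) * (\<Prod>b\<in>A. f b (p b)))"
      by (simp add: s)
  qed
  also have "\<dots> = - altS A f" unfolding altS_def by (simp add: sum_negf)
  finally show ?thesis by simp
qed

lemma prod_one_col:
  assumes "finite A" "p permutes A" "c \<in> A"
  shows "(\<Prod>b\<in>A. (if p b = c then u b else f b (p b))) = u (inv p c) * (\<Prod>b\<in>A - {inv p c}. f b (p b))"
proof -
  have b0: "inv p c \<in> A" using assms by (simp add: permutes_inv permutes_in_image)
  have pb0: "p (inv p c) = c" using assms by (simp add: permutes_inverses)
  have "(\<Prod>b\<in>A. (if p b = c then u b else f b (p b))) =
     (if p (inv p c) = c then u (inv p c) else f (inv p c) (p (inv p c))) * (\<Prod>b\<in>A - {inv p c}. (if p b = c then u b else f b (p b)))"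
    using prod.remove[OF assms(1) b0] by blast
  also have "(\<Prod>b\<in>A - {inv p c}. (if p b = c then u b else f b (p b))) = (\<Prod>b\<in>A - {inv p c}. f b (p b))"
  proof (rule prod.cong[OF refl])
    fix b assume "b \<in> A - {inv p c}"
    then have "p b \<noteq> c" using assms(2) by (metis DiffD2 insertI1 permutes_inverses(2))
    then show "(if p b = c then u b else f b (p b)) = f b (p b)" by simp
  qed
  finally show ?thesis using pb0 by simp
qed

lemma alt_col_lin:
  assumes "finite A" "c \<in> A"
  shows "altS A (\<lambda>b d. if d = c then \<alpha> * u b + \<beta> * u' b else f b d)
     = \<alpha> * altS A (\<lambda>b d. if d = c then u b else f b d) + \<beta> * altS A (\<lambda>b d. if d = c then u' b else f b d)"
proof -
  have "of_int (sign p) * (\<Prod>b\<in>A. (if p b = c then \<alpha> * u b + \<beta> * u' b else f b (p b)))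
     = \<alpha> * (of_int (sign p) * (\<Prod>b\<in>A. (if p b = c then u b else f b (p b))))
       + \<beta> * (of_int (sign p) * (\<Prod>b\<in>A. (if p b = c then u' b else f b (p b))))"
    if "p permutes A" for p
    using prod_one_col[OF assms(1) that assms(2), of "\<lambda>b. \<alpha> * u b + \<beta> * u' b" f]
      prod_one_col[OF assms(1) that assms(2), of u f] prod_one_col[OF assms(1) that assms(2), of u' f]
    by (simp add: algebra_simps)
  then show ?thesis unfolding altS_def
    by (simp add: sum.distrib sum_distrib_left)
qed

lemma perm_fix0:
  assumes "P permutes {0..k}" "P 0 = (0::nat)"
  shows "P permutes {1..k}"
proof -
  have "\<forall>x. x \<notin> {1..k} \<longrightarrow> P x = x"
  proof (intro allI impI)
    fix x assume x: "x \<notin> {1..k}"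
    show "P x = x"
    proof (cases "x = 0")
      case True then show ?thesis using assms(2) by simp
    next
      case False then have "x \<notin> {0..k}" using x by auto
      then show ?thesis using permutes_not_in[OF assms(1)] by simp
    qed
  qed
  moreover have "\<forall>y. \<exists>!x. P x = y" using assms(1) by (simp add: permutes_def)
  ultimately show ?thesis by (simp add: permutes_def)
qed

lemma perm_shift_ok:
  assumes c: "c \<in> {0..k}" and p: "p permutes {1..(k::nat)}"
  shows "p \<circ> Transposition.transpose 0 c permutes {0..k}"
  using c by (intro permutes_compose[OF permutes_swap_id permutes_subset[OF p]]) auto

lemma bij_perm0:
  "bij_betw (\<lambda>(c,p). p \<circ> Transposition.transpose 0 c) ({0..k} \<times> {p. p permutes {1..k}}) {P. P permutes {0..(k::nat)}}"
proof -
  define f :: "nat \<times> (nat \<Rightarrow> nat) \<Rightarrow> nat \<Rightarrow> nat" where "f = (\<lambda>(c,p). p \<circ> Transposition.transpose 0 c)"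
  define g :: "(nat \<Rightarrow> nat) \<Rightarrow> nat \<times> (nat \<Rightarrow> nat)" where "g = (\<lambda>P. (inv P 0, P \<circ> Transposition.transpose 0 (inv P 0)))"
  have 1: "\<forall>a\<in>{0..k} \<times> {p. p permutes {1..k}}. g (f a) = a"
  proof (clarify)
    fix c p assume c: "c \<in> {0..k}" and p: "p permutes {1..(k::nat)}"
    have p0: "p 0 = 0" using permutes_not_in[OF p, of 0] by simp
    have pp: "p \<circ> Transposition.transpose 0 c permutes {0..k}" using perm_shift_ok[OF c p] .
    have "(p \<circ> Transposition.transpose 0 c) c = 0" using p0 by simp
    then have i: "inv (p \<circ> Transposition.transpose 0 c) 0 = c" using pp by (simp add: permutes_inv_eq)
    show "g (f (c, p)) = (c, p)"
      unfolding f_def g_def using i by (simp add: comp_assoc)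
  qed
  have 2: "\<forall>a'\<in>{P. P permutes {0..k}}. f (g a') = a'"
  proof
    fix P assume "P \<in> {P. P permutes {0..k}}"
    have "P \<circ> Transposition.transpose 0 (inv P 0) \<circ> Transposition.transpose 0 (inv P 0) = P"
      by (simp add: comp_assoc)
    then show "f (g P) = P" unfolding f_def g_def by simp
  qed
  have 3: "f ` ({0..k} \<times> {p. p permutes {1..k}}) \<subseteq> {P. P permutes {0..k}}"
    unfolding f_def
  proof (rule image_subsetI)
    fix x assume "x \<in> {0..k} \<times> {p. p permutes {1..k}}"
    then show "(\<lambda>(c, p). p \<circ> Transposition.transpose 0 c) x \<in> {P. P permutes {0..k}}"
      using perm_shift_ok by (cases x) simp
  qed
  have 4: "g ` {P. P permutes {0..k}} \<subseteq> {0..k} \<times> {p. p permutes {1..k}}"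
  proof
    fix x assume "x \<in> g ` {P. P permutes {0..k}}"
    then obtain P where P: "P permutes {0..(k::nat)}" and x: "x = g P" by auto
    have i: "inv P 0 \<in> {0..k}" using permutes_in_image[OF permutes_inv[OF P]] by simp
    have "P \<circ> Transposition.transpose 0 (inv P 0) permutes {0..k}"
      using P i by (simp add: permutes_compose permutes_swap_id)
    moreover have "(P \<circ> Transposition.transpose 0 (inv P 0)) 0 = 0" using P by (simp add: permutes_inverses)
    ultimately show "x \<in> {0..k} \<times> {p. p permutes {1..k}}"
      unfolding x g_def using i perm_fix0 by auto
  qed
  show ?thesis using bij_betw_byWitness[OF 1 2 3 4] unfolding f_def .
qed

definition dotv :: "complex^'n \<Rightarrow> complex^'n \<Rightarrow> complex" where
  "dotv \<psi> y = (\<Sum>e\<in>UNIV. \<psi>$e * y$e)"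

lemma dotv_add2: "dotv \<psi> (x + y) = dotv \<psi> x + dotv \<psi> y"
  unfolding dotv_def by (simp add: algebra_simps sum.distrib)
lemma dotv_diff2: "dotv \<psi> (x - y) = dotv \<psi> x - dotv \<psi> y"
  unfolding dotv_def by (simp add: algebra_simps sum_subtractf)
lemma dotv_neg2: "dotv \<psi> (- x) = - dotv \<psi> x"
  unfolding dotv_def by (simp add: sum_negf)
lemma dotv_scale2: "dotv \<psi> (c *s x) = c * dotv \<psi> x"
  unfolding dotv_def by (simp add: algebra_simps sum_distrib_left)
lemma dotv_sum2: "dotv \<psi> (\<Sum>i\<in>S. f i) = (\<Sum>i\<in>S. dotv \<psi> (f i))"
  unfolding dotv_def by (simp add: sum_distrib_left sum.swap[of _ S])
lemma dotv_diff1: "dotv (\<psi> - \<psi>') x = dotv \<psi> x - dotv \<psi>' x"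
  unfolding dotv_def by (simp add: algebra_simps sum_subtractf)
lemma dotv_scale1: "dotv (c *s \<psi>) x = c * dotv \<psi> x"
  unfolding dotv_def by (simp add: algebra_simps sum_distrib_left)

definition Dk :: "nat \<Rightarrow> (nat \<Rightarrow> complex^'n) \<Rightarrow> (nat \<Rightarrow> complex^'n) \<Rightarrow> complex" where
  "Dk k w \<psi> = altS {1..k} (\<lambda>b c. dotv (\<psi> b) (w c))"

lemma hook_id:
  assumes k: "1 \<le> k"
  shows "dotv \<theta> (w 1) * Dk k w \<psi> = (\<Sum>c\<in>{1..k}. dotv (\<psi> c) (w 1) * Dk k w (\<psi>(c := \<theta>)))"
proof -
  define R where "R b = (if b = 0 then \<theta> else \<psi> b)" for b
  define Cl where "Cl c = (if c = 0 then w 1 else w c)" for c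
  define G where "G b c = dotv (R b) (Cl c)" for b c
  let ?tr = "\<lambda>c. Transposition.transpose (0::nat) c"
  let ?P = "{p. p permutes {1..k}}"
  have zero: "altS {0..k} G = 0"
    by (rule alt_eq_cols[of _ 0 1]) (use k in \<open>auto simp: G_def Cl_def\<close>)
  have "altS {0..k} G = (\<Sum>x\<in>{0..k} \<times> ?P. (\<lambda>P. of_int (sign P) * (\<Prod>b\<in>{0..k}. G b (P b)))
        ((\<lambda>(c,p). p \<circ> ?tr c) x))"
    unfolding altS_def by (rule sum.reindex_bij_betw[OF bij_perm0, symmetric])
  also have "\<dots> = (\<Sum>c\<in>{0..k}. \<Sum>p\<in>?P. of_int (sign (p \<circ> ?tr c)) * (\<Prod>b\<in>{0..k}. G b ((p \<circ> ?tr c) b)))"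
    by (simp add: sum.cartesian_product split_def)
  also have "\<dots> = (\<Sum>p\<in>?P. of_int (sign (p \<circ> ?tr 0)) * (\<Prod>b\<in>{0..k}. G b ((p \<circ> ?tr 0) b)))
      + (\<Sum>c\<in>{1..k}. \<Sum>p\<in>?P. of_int (sign (p \<circ> ?tr c)) * (\<Prod>b\<in>{0..k}. G b ((p \<circ> ?tr c) b)))"
  proof -
    have "{0..k} = insert 0 {1..k}" by auto
    then show ?thesis by simp
  qed
  also have "(\<Sum>p\<in>?P. of_int (sign (p \<circ> ?tr 0)) * (\<Prod>b\<in>{0..k}. G b ((p \<circ> ?tr 0) b)))
      = dotv \<theta> (w 1) * Dk k w \<psi>"
  proof -
    have "of_int (sign (p \<circ> ?tr 0)) * (\<Prod>b\<in>{0..k}. G b ((p \<circ> ?tr 0) b))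
       = dotv \<theta> (w 1) * (of_int (sign p) * (\<Prod>b\<in>{1..k}. dotv (\<psi> b) (w (p b))))" if p: "p permutes {1..k}" for p
    proof -
      have p0: "p 0 = 0" using permutes_not_in[OF p, of 0] by simp
      have "{0..k} = insert 0 {1..k}" by auto
      then have "(\<Prod>b\<in>{0..k}. G b (p b)) = G 0 (p 0) * (\<Prod>b\<in>{1..k}. G b (p b))" by simp
      also have "(\<Prod>b\<in>{1..k}. G b (p b)) = (\<Prod>b\<in>{1..k}. dotv (\<psi> b) (w (p b)))"
      proof (rule prod.cong[OF refl])
        fix b assume b: "b \<in> {1..k}"
        then have "p b \<in> {1..k}" using permutes_in_image[OF p] by blast
        then show "G b (p b) = dotv (\<psi> b) (w (p b))" using b by (simp add: G_def R_def Cl_def)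
      qed
      finally show ?thesis using p0 by (simp add: G_def R_def Cl_def)
    qed
    then show ?thesis unfolding Dk_def altS_def sum_distrib_left
      by (intro sum.cong refl) (simp add: mult.left_commute)
  qed
  also have "(\<Sum>c\<in>{1..k}. \<Sum>p\<in>?P. of_int (sign (p \<circ> ?tr c)) * (\<Prod>b\<in>{0..k}. G b ((p \<circ> ?tr c) b)))
      = (\<Sum>c\<in>{1..k}. - (dotv (\<psi> c) (w 1) * Dk k w (\<psi>(c := \<theta>))))"
  proof (rule sum.cong[OF refl])
    fix c assume c: "c \<in> {1..k}"
    have "of_int (sign (p \<circ> ?tr c)) * (\<Prod>b\<in>{0..k}. G b ((p \<circ> ?tr c) b))
       = - (dotv (\<psi> c) (w 1) * (of_int (sign p) * (\<Prod>b\<in>{1..k}. dotv ((\<psi>(c := \<theta>)) b) (w (p b)))))"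
      if p: "p permutes {1..k}" for p
    proof -
      have p0: "p 0 = 0" using permutes_not_in[OF p, of 0] by simp
      have pc: "p c \<in> {1..k}" using permutes_in_image[OF p] c by blast
      have "sign (p \<circ> ?tr c) = sign p * sign (?tr c)"
        by (rule sign_compose) (use p in \<open>auto intro: permutes_imp_permutation permutation_swap_id\<close>)
      then have s: "sign (p \<circ> ?tr c) = - sign p" using c by (simp add: sign_swap_id)
      have fin: "finite {1..k}" by simp
      have "{0..k} = insert 0 {1..k}" by auto
      then have "(\<Prod>b\<in>{0..k}. G b ((p \<circ> ?tr c) b)) = G 0 (p c) * (\<Prod>b\<in>{1..k}. G b ((p \<circ> ?tr c) b))"
        by simp
      also have "(\<Prod>b\<in>{1..k}. G b ((p \<circ> ?tr c) b)) = G c (p 0) * (\<Prod>b\<in>{1..k} - {c}. G b ((p \<circ> ?tr c) b))"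
        using prod.remove[OF fin c, of "\<lambda>b. G b ((p \<circ> ?tr c) b)"] c by simp
      also have "(\<Prod>b\<in>{1..k} - {c}. G b ((p \<circ> ?tr c) b)) = (\<Prod>b\<in>{1..k} - {c}. dotv (\<psi> b) (w (p b)))"
      proof (rule prod.cong[OF refl])
        fix b assume b: "b \<in> {1..k} - {c}"
        then have "p b \<in> {1..k}" using permutes_in_image[OF p] by blast
        then show "G b ((p \<circ> ?tr c) b) = dotv (\<psi> b) (w (p b))" using b by (simp add: G_def R_def Cl_def)
      qed
      also have "(\<Prod>b\<in>{1..k}. dotv ((\<psi>(c := \<theta>)) b) (w (p b))) = dotv \<theta> (w (p c)) * (\<Prod>b\<in>{1..k} - {c}. dotv (\<psi> b) (w (p b)))"
        using prod.remove[OF fin c, of "\<lambda>b. dotv ((\<psi>(c := \<theta>)) b) (w (p b))"] by simp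
      ultimately show ?thesis using p0 pc c s by (simp add: G_def R_def Cl_def)
    qed
    then show "(\<Sum>p\<in>?P. of_int (sign (p \<circ> ?tr c)) * (\<Prod>b\<in>{0..k}. G b ((p \<circ> ?tr c) b)))
      = - (dotv (\<psi> c) (w 1) * Dk k w (\<psi>(c := \<theta>)))"
      unfolding Dk_def altS_def by (simp add: sum_distrib_left sum_negf)
  qed
  finally show ?thesis using zero by (simp add: sum_negf)
qed

definition Ck :: "nat \<Rightarrow> ((nat \<Rightarrow> 'n::finite) \<Rightarrow> complex) \<Rightarrow> (nat \<Rightarrow> complex^'n) \<Rightarrow> complex" where
  "Ck k T \<psi> = (\<Sum>I\<in>PiE {1..Suc k} (\<lambda>_. UNIV). T I * (\<Prod>b\<in>{1..Suc k}. \<psi> b $ I b))"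

lemma Ck_add: "Ck k (\<lambda>I. T1 I + T2 I) \<psi> = Ck k T1 \<psi> + Ck k T2 \<psi>"
  unfolding Ck_def by (simp add: algebra_simps sum.distrib)

lemma Ck_scale: "Ck k (\<lambda>I. c * T I) \<psi> = c * Ck k T \<psi>"
  unfolding Ck_def by (simp add: algebra_simps sum_distrib_left)

lemma Ck_sum: "Ck k (\<lambda>I. \<Sum>m\<in>S. F m I) \<psi> = (\<Sum>m\<in>S. Ck k (F m) \<psi>)"
  unfolding Ck_def by (simp add: sum_distrib_right sum.swap[of _ S])

lemma Ck_tens_wedge: "Ck k (tens k (wedge k w) x) \<psi> = Dk k w \<psi> * dotv (\<psi> (Suc k)) x"
proof -
  define g where "g p b y = (if b = Suc k then x$y else w (p b) $ y) * \<psi> b $ y" for p b y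
  have fin: "finite {1..Suc k}" by simp
  have ins: "{1..Suc k} = insert (Suc k) {1..k}" by auto
  have e1: "tens k (wedge k w) x I * (\<Prod>b\<in>{1..Suc k}. \<psi> b $ I b)
      = (\<Sum>p | p permutes {1..k}. of_int (sign p) * (\<Prod>b\<in>{1..Suc k}. g p b (I b)))" for I
  proof -
    have "(\<Prod>b\<in>{1..Suc k}. g p b (I b)) = ((\<Prod>b\<in>{1..k}. w (p b) $ I b) * x $ I (Suc k)) * (\<Prod>b\<in>{1..Suc k}. \<psi> b $ I b)" for p
    proof -
      have "(\<Prod>b\<in>{1..Suc k}. g p b (I b)) = (\<Prod>b\<in>{1..Suc k}. (if b = Suc k then x$I b else w (p b) $ I b)) * (\<Prod>b\<in>{1..Suc k}. \<psi> b $ I b)"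
        unfolding g_def by (rule prod.distrib)
      also have "(\<Prod>b\<in>{1..Suc k}. (if b = Suc k then x$I b else w (p b) $ I b)) = x $ I (Suc k) * (\<Prod>b\<in>{1..k}. (if b = Suc k then x$I b else w (p b) $ I b))"
        unfolding ins by simp
      also have "(\<Prod>b\<in>{1..k}. (if b = Suc k then x$I b else w (p b) $ I b)) = (\<Prod>b\<in>{1..k}. w (p b) $ I b)"
        by (rule prod.cong) auto
      finally show ?thesis by (simp add: mult.commute)
    qed
    then show ?thesis unfolding tens_def wedge_def by (simp add: sum_distrib_right mult.assoc)
  qed
  have "Ck k (tens k (wedge k w) x) \<psi> = (\<Sum>p | p permutes {1..k}. of_int (sign p) *
        (\<Sum>I\<in>PiE {1..Suc k} (\<lambda>_. UNIV). \<Prod>b\<in>{1..Suc k}. g p b (I b)))"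
    unfolding Ck_def e1 sum_distrib_left by (rule sum.swap)
  also have "\<dots> = (\<Sum>p | p permutes {1..k}. of_int (sign p) * (\<Prod>b\<in>{1..Suc k}. \<Sum>y\<in>UNIV. g p b y))"
  proof -
    have eq: "\<And>p. (\<Prod>b\<in>{1..Suc k}. \<Sum>y\<in>UNIV. g p b y) = (\<Sum>I\<in>PiE {1..Suc k} (\<lambda>_. UNIV). \<Prod>b\<in>{1..Suc k}. g p b (I b))"
      by (rule prod_sum_PiE) auto
    show ?thesis by (simp only: eq)
  qed
  also have "\<dots> = (\<Sum>p | p permutes {1..k}. of_int (sign p) * ((\<Prod>b\<in>{1..k}. dotv (\<psi> b) (w (p b))) * dotv (\<psi> (Suc k)) x))"
  proof (rule sum.cong[OF refl])
    fix p
    have "(\<Prod>b\<in>{1..Suc k}. \<Sum>y\<in>UNIV. g p b y) = (\<Sum>y\<in>UNIV. g p (Suc k) y) * (\<Prod>b\<in>{1..k}. \<Sum>y\<in>UNIV. g p b y)"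
      unfolding ins by simp
    also have "(\<Prod>b\<in>{1..k}. \<Sum>y\<in>UNIV. g p b y) = (\<Prod>b\<in>{1..k}. dotv (\<psi> b) (w (p b)))"
      by (rule prod.cong) (auto simp: g_def dotv_def mult.commute)
    also have "(\<Sum>y\<in>UNIV. g p (Suc k) y) = dotv (\<psi> (Suc k)) x"
      by (simp add: g_def dotv_def mult.commute)
    finally show "of_int (sign p) * (\<Prod>b\<in>{1..Suc k}. \<Sum>y\<in>UNIV. g p b y) = of_int (sign p) * ((\<Prod>b\<in>{1..k}. dotv (\<psi> b) (w (p b))) * dotv (\<psi> (Suc k)) x)"
      by (simp add: mult.commute)
  qed
  also have "\<dots> = Dk k w \<psi> * dotv (\<psi> (Suc k)) x"
    unfolding Dk_def altS_def by (simp add: sum_distrib_right mult.assoc)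
  finally show ?thesis .
qed

lemma dual_basis:
  fixes v :: "nat \<Rightarrow> complex^'n"
  assumes inj: "inj_on v {1..CARD('n)}" and ind: "vec.independent (v ` {1..CARD('n)})"
  shows "\<exists>\<phi>. \<forall>l\<in>{1..CARD('n)}. \<forall>m\<in>{1..CARD('n)}. dotv (\<phi> l) (v m) = (if l = m then 1 else 0)"
proof -
  let ?B = "v ` {1..CARD('n)}"
  have cardB: "card ?B = CARD('n)" using card_image[OF inj] by simp
  have sp: "UNIV \<subseteq> vec.span ?B"
    by (rule vec.card_ge_dim_independent) (use ind cardB in \<open>auto simp: card_cart_basis\<close>)
  define \<phi> where "\<phi> l = (\<chi> e. vec.representation ?B (axis e 1) (v l))" for l
  have dv: "dotv (\<phi> l) y = vec.representation ?B y (v l)" for l y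
  proof -
    have "dotv (\<phi> l) y = (\<Sum>e\<in>UNIV. y$e * vec.representation ?B (axis e 1) (v l))"
      unfolding dotv_def \<phi>_def by (simp add: mult.commute)
    also have "\<dots> = vec.representation ?B (\<Sum>e\<in>UNIV. y$e *s axis e 1) (v l)"
    proof -
      have ax: "\<And>x. x \<in> vec.span ?B" using sp by auto
      have "vec.representation ?B (\<Sum>e\<in>UNIV. y$e *s axis e 1) = (\<lambda>b. \<Sum>e\<in>UNIV. vec.representation ?B (y$e *s axis e 1) b)"
        by (rule vec.representation_sum[OF ind], rule ax)
      moreover have sc: "\<And>e. vec.representation ?B (y$e *s axis e 1) = (\<lambda>b. y$e * vec.representation ?B (axis e 1) b)"
        by (rule vec.representation_scale[OF ind], rule ax)
      ultimately show ?thesis by simp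
    qed
    also have "(\<Sum>e\<in>UNIV. y$e *s axis e 1) = y" by (rule basis_expansion)
    finally show ?thesis .
  qed
  show ?thesis
  proof (intro exI ballI)
    fix l m assume l: "l \<in> {1..CARD('n)}" and m: "m \<in> {1..CARD('n)}"
    have "vec.representation ?B (v m) = (\<lambda>u. if u = v m then 1 else 0)"
      by (rule vec.representation_basis[OF ind]) (use m in auto)
    moreover have "v l = v m \<longleftrightarrow> l = m" using inj l m by (auto dest: inj_onD)
    ultimately show "dotv (\<phi> l) (v m) = (if l = m then 1 else 0)" by (simp add: dv)
  qed
qed

lemma indep_diag:
  fixes w \<psi> :: "nat \<Rightarrow> complex^'n"
  assumes dg: "\<And>b c. b \<in> {1..k} \<Longrightarrow> c \<in> {1..k} \<Longrightarrow> dotv (\<psi> b) (w c) = (if b = c then d b else 0)"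
    and nz: "\<And>b. b \<in> {1..k} \<Longrightarrow> d b \<noteq> 0"
  shows "indep_fam k w"
proof -
  have inj: "inj_on w {1..k}"
  proof (rule inj_onI)
    fix c1 c2 assume c: "c1 \<in> {1..k}" "c2 \<in> {1..k}" "w c1 = w c2"
    have "dotv (\<psi> c1) (w c2) = d c1" using dg[of c1 c1] c by simp
    then show "c1 = c2" using dg[of c1 c2] c nz[of c1] by (auto split: if_splits)
  qed
  have "\<not> vec.dependent (w ` {1..k})"
  proof
    assume "vec.dependent (w ` {1..k})"
    then obtain u y0 where y0: "y0 \<in> w ` {1..k}" "u y0 \<noteq> 0" and s: "(\<Sum>y\<in>w ` {1..k}. u y *s y) = 0"
      using vec.dependent_finite[of "w ` {1..k}"] by auto
    obtain c0 where c0: "c0 \<in> {1..k}" "y0 = w c0" using y0 by auto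
    have "0 = dotv (\<psi> c0) (\<Sum>y\<in>w ` {1..k}. u y *s y)" using s by (simp add: dotv_def)
    also have "\<dots> = (\<Sum>y\<in>w ` {1..k}. u y * dotv (\<psi> c0) y)" by (simp add: dotv_sum2 dotv_scale2)
    also have "\<dots> = (\<Sum>c\<in>{1..k}. u (w c) * dotv (\<psi> c0) (w c))" by (subst sum.reindex[OF inj]) (simp add: o_def)
    also have "\<dots> = (\<Sum>c\<in>{1..k}. if c = c0 then u (w c0) * d c0 else 0)"
      by (rule sum.cong[OF refl]) (use dg c0 in auto)
    also have "\<dots> = u (w c0) * d c0" using c0 by simp
    finally show False using c0 y0 nz[OF c0(1)] by simp
  qed
  then show ?thesis using inj unfolding indep_fam_def by simp
qed

lemma wedge_upd:
  "wedge k (w(c := x)) I = altS {1..k} (\<lambda>b d. if d = c then x $ I b else w d $ I b)"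
  unfolding wedge_alt by (rule alt_cong) simp

lemma wedge_lin:
  assumes "c \<in> {1..k}"
  shows "wedge k (w(c := \<alpha> *s y + \<beta> *s z)) I = \<alpha> * wedge k (w(c := y)) I + \<beta> * wedge k (w(c := z)) I"
proof -
  have e: "\<And>b. (\<alpha> *s y + \<beta> *s z) $ I b = \<alpha> * y $ I b + \<beta> * z $ I b" by simp
  show ?thesis
    unfolding wedge_upd e using alt_col_lin[of "{1..k}" c \<alpha> "\<lambda>b. y $ I b" \<beta> "\<lambda>b. z $ I b" "\<lambda>b d. w d $ I b"] assms
    by simp
qed

lemma wedge_add:
  assumes "c \<in> {1..k}"
  shows "wedge k (w(c := y + z)) I = wedge k (w(c := y)) I + wedge k (w(c := z)) I"
  using wedge_lin[OF assms, of w 1 y 1 z I] by simp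

lemma wedge_smult:
  assumes "c \<in> {1..k}"
  shows "wedge k (w(c := \<alpha> *s y)) I = \<alpha> * wedge k (w(c := y)) I"
  using wedge_lin[OF assms, of w \<alpha> y 0 y I] by simp

lemma wedge_neg:
  assumes "c \<in> {1..k}"
  shows "wedge k (w(c := - y)) I = - wedge k (w(c := y)) I"
  using wedge_lin[OF assms, of w "-1" y 0 y I] by simp

lemma wedge_diff:
  assumes "c \<in> {1..k}"
  shows "wedge k (w(c := y - z)) I = wedge k (w(c := y)) I - wedge k (w(c := z)) I"
  using wedge_lin[OF assms, of w 1 y "-1" z I] by simp

lemma wedge_eq0:
  assumes "c1 \<in> {1..k}" "c2 \<in> {1..k}" "c1 \<noteq> c2" "w c1 = w c2"
  shows "wedge k w I = 0"
  unfolding wedge_alt by (rule alt_eq_cols[of _ c1 c2]) (use assms in auto)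

lemma Dk_diag:
  assumes "\<And>b c. b \<in> {1..k} \<Longrightarrow> c \<in> {1..k} \<Longrightarrow> dotv (\<psi> b) (w c) = (if b = c then d b else 0)"
  shows "Dk k w \<psi> = (\<Prod>b\<in>{1..k}. d b)"
  unfolding Dk_def by (subst alt_diag) (use assms in auto)

lemma Dk_zero_row:
  assumes "b0 \<in> {1..k}" "\<And>c. c \<in> {1..k} \<Longrightarrow> dotv (\<psi> b0) (w c) = 0"
  shows "Dk k w \<psi> = 0"
  unfolding Dk_def by (rule alt_zero_row[of _ b0]) (use assms in auto)

lemma Dk_cong:
  assumes "\<And>b. b \<in> {1..k} \<Longrightarrow> \<psi> b = \<psi>' b"
  shows "Dk k w \<psi> = Dk k w \<psi>'"
  unfolding Dk_def by (rule alt_cong) (use assms in auto)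

context
  fixes v \<phi> :: "nat \<Rightarrow> complex^'n" and n :: nat
  assumes dual: "\<And>l m. l \<in> {1..n} \<Longrightarrow> m \<in> {1..n} \<Longrightarrow> dotv (\<phi> l) (v m) = (if l = m then 1 else 0)"
begin

lemma Dk_label_one:
  assumes "\<And>c. c \<in> {1..k} \<Longrightarrow> w c = v (\<tau> c)" "\<tau> ` {1..k} \<subseteq> {1..n}" "inj_on \<tau> {1..k}"
  shows "Dk k w (\<lambda>b. \<phi> (\<tau> b)) = 1"
proof -
  have "Dk k w (\<lambda>b. \<phi> (\<tau> b)) = (\<Prod>b\<in>{1..k}. (1::complex))"
  proof (rule Dk_diag)
    fix b c assume bc: "b \<in> {1..k}" "c \<in> {1..k}"
    then have e: "\<tau> b = \<tau> c \<longleftrightarrow> b = c" using assms(3) by (auto dest: inj_onD)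
    have m: "\<tau> b \<in> {1..n}" "\<tau> c \<in> {1..n}" using bc assms(2) by blast+
    have "dotv (\<phi> (\<tau> b)) (w c) = dotv (\<phi> (\<tau> b)) (v (\<tau> c))" using assms(1) bc by simp
    also have "\<dots> = (if \<tau> b = \<tau> c then 1 else 0)" by (rule dual[OF m])
    finally show "dotv (\<phi> (\<tau> b)) (w c) = (if b = c then 1 else 0)" using e by simp
  qed
  then show ?thesis by simp
qed

lemma Dk_label_zero:
  assumes "\<And>c. c \<in> {1..k} \<Longrightarrow> w c = v (\<tau> c)" "\<tau> ` {1..k} \<subseteq> {1..n}"
    and "b0 \<in> {1..k}" "S b0 \<in> {1..n}" "S b0 \<notin> \<tau> ` {1..k}"
  shows "Dk k w (\<lambda>b. \<phi> (S b)) = 0"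
proof (rule Dk_zero_row[OF assms(3)])
  fix c assume c: "c \<in> {1..k}"
  then have "S b0 \<noteq> \<tau> c" using assms(5) by auto
  have m: "\<tau> c \<in> {1..n}" using c assms(2) by blast
  have "dotv (\<phi> (S b0)) (w c) = dotv (\<phi> (S b0)) (v (\<tau> c))" using assms(1) c by simp
  also have "\<dots> = (if S b0 = \<tau> c then 1 else 0)" by (rule dual[OF assms(4) m])
  finally show "dotv (\<phi> (S b0)) (w c) = 0" using \<open>S b0 \<noteq> \<tau> c\<close> by simp
qed

end

lemma rank_eqI:
  assumes "\<exists>ws :: nat \<Rightarrow> nat \<Rightarrow> complex^'n::finite. (\<forall>m<r. indep_fam k (ws m)) \<and> t = (\<lambda>I. \<Sum>m<r. rk1 k (ws m) I)"
    and "\<And>r' (ws :: nat \<Rightarrow> nat \<Rightarrow> complex^'n). r' < r \<Longrightarrow> (\<forall>m<r'. indep_fam k (ws m)) \<Longrightarrow> t = (\<lambda>I. \<Sum>m<r'. rk1 k (ws m) I) \<Longrightarrow> False"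
  shows "hook_rank k t = r"
  unfolding hook_rank_def
  by (rule Least_equality) (use assms in \<open>auto simp: not_less[symmetric]\<close>)

definition PsiL :: "(nat \<Rightarrow> complex^'n) \<Rightarrow> nat \<Rightarrow> (nat \<Rightarrow> nat) \<Rightarrow> nat \<Rightarrow> nat \<Rightarrow> complex^'n" where
  "PsiL \<phi> k S l = (\<lambda>b. if b = Suc k then \<phi> l else \<phi> (S b))"

lemma Ck_tensL: "Ck k (tens k (wedge k w) x) (PsiL \<phi> k S l) = Dk k w (\<lambda>b. \<phi> (S b)) * dotv (\<phi> l) x"
proof -
  have "Dk k w (PsiL \<phi> k S l) = Dk k w (\<lambda>b. \<phi> (S b))"
    by (rule Dk_cong) (auto simp: PsiL_def)
  then show ?thesis unfolding Ck_tens_wedge by (simp add: PsiL_def)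
qed

lemma Ck_rk1: "Ck k (rk1 k w) (PsiL \<phi> k S l) = Dk k w (\<lambda>b. \<phi> (S b)) * dotv (\<phi> l) (w 1)"
  unfolding rk1_def by (rule Ck_tensL)

lemma Ck_sum_rk1:
  assumes "t = (\<lambda>I. \<Sum>m<r. rk1 k (ws m) I)"
  shows "Ck k t (PsiL \<phi> k S l) = (\<Sum>m<r. Dk k (ws m) (\<lambda>b. \<phi> (S b)) * dotv (\<phi> l) (ws m 1))"
  unfolding assms Ck_sum Ck_rk1 ..

lemma Ck_tT: "Ck k (tT k v a b i j h) (PsiL \<phi> k S l) =
   a * (Dk k (v(i := v j)) (\<lambda>b. \<phi> (S b)) * dotv (\<phi> l) (v 1))
 + b * (Dk k v (\<lambda>b. \<phi> (S b)) * dotv (\<phi> l) (v h) + Dk k (v(1 := v h)) (\<lambda>b. \<phi> (S b)) * dotv (\<phi> l) (v 1))"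
proof -
  have "Ck k (tT k v a b i j h) (PsiL \<phi> k S l) =
     a * Ck k (tens k (wedge k (v(i := v j))) (v 1)) (PsiL \<phi> k S l)
   + b * (Ck k (tens k (wedge k v) (v h)) (PsiL \<phi> k S l) + Ck k (tens k (wedge k (v(1 := v h))) (v 1)) (PsiL \<phi> k S l))"
    unfolding tT_def by (simp add: Ck_add Ck_scale)
  then show ?thesis by (simp only: Ck_tensL)
qed


lemma sum_single1:
  assumes "1 \<le> (k::nat)" "\<And>c. c \<in> {1..k} \<Longrightarrow> c \<noteq> 1 \<Longrightarrow> f c = (0::complex)"
  shows "(\<Sum>c\<in>{1..k}. f c) = f 1"
proof -
  have "(\<Sum>c\<in>{1..k}. f c) = f 1 + (\<Sum>c\<in>{1..k}-{1}. f c)"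
    by (rule sum.remove) (use assms in auto)
  also have "(\<Sum>c\<in>{1..k}-{1}. f c) = 0" by (rule sum.neutral) (use assms in auto)
  finally show ?thesis by simp
qed

lemma alg3:
  fixes dW0 dW1 dA0 dA1 dB0 dB1 dZ0 dZ1 x01 x11 x0h x1h a b :: complex
  assumes a: "a \<noteq> 0" and b: "b \<noteq> 0"
    and e1: "dW0 * x0h + dW1 * x1h = b" and e2: "dW0 * x01 + dW1 * x11 = 0"
    and e3: "dA0 * x0h + dA1 * x1h = 0" and e4: "dA0 * x01 + dA1 * x11 = a"
    and e5: "dB0 * x01 + dB1 * x11 = b" and e6: "dB0 * x0h + dB1 * x1h = 0"
    and e7: "dZ0 * x01 + dZ1 * x11 = 0" and e8: "dZ0 * x0h + dZ1 * x1h = 0"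
    and H1: "x0h * dW0 = x01 * dB0" and H2: "x0h * dA0 = x01 * dZ0"
  shows False
proof -
  define D where "D = dW0 * dA1 - dW1 * dA0"
  define X where "X = x01 * x1h - x11 * x0h"
  have "D * X = (dW0 * x01 + dW1 * x11) * (dA0 * x0h + dA1 * x1h) - (dW0 * x0h + dW1 * x1h) * (dA0 * x01 + dA1 * x11)"
    unfolding D_def X_def by algebra
  then have DX: "D * X = - (b * a)" using e1 e2 e3 e4 by simp
  then have D0: "D \<noteq> 0" and X0: "X \<noteq> 0" using a b by auto
  have "dZ0 * X = x1h * (dZ0 * x01 + dZ1 * x11) - x11 * (dZ0 * x0h + dZ1 * x1h)"
    unfolding X_def by algebra
  then have "dZ0 = 0" using e7 e8 X0 by simp
  then have H2': "x0h * dA0 = 0" using H2 by simp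
  have "x0h * D = dA1 * (dW0 * x0h + dW1 * x1h) - dW1 * (dA0 * x0h + dA1 * x1h)"
    unfolding D_def by algebra
  then have d1: "x0h * D = dA1 * b" using e1 e3 by simp
  have "x1h * D = dW0 * (dA0 * x0h + dA1 * x1h) - dA0 * (dW0 * x0h + dW1 * x1h)"
    unfolding D_def by algebra
  then have d2: "x1h * D = - (dA0 * b)" using e1 e3 by simp
  have "x01 * D = dA1 * (dW0 * x01 + dW1 * x11) - dW1 * (dA0 * x01 + dA1 * x11)"
    unfolding D_def by algebra
  then have d3: "x01 * D = - (dW1 * a)" using e2 e4 by simp
  have "dB0 * X = x1h * (dB0 * x01 + dB1 * x11) - x11 * (dB0 * x0h + dB1 * x1h)"
    unfolding X_def by algebra
  then have d5: "dB0 * X = x1h * b" using e5 e6 by simp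
  have "dA1 * dA0 * b = x0h * dA0 * D" using d1 by (simp add: algebra_simps)
  then have AA: "dA1 * dA0 = 0" using H2' b by simp
  have "(x0h * D) * dW0 * (D * X) = (x01 * D) * (dB0 * X) * D" using H1 by (simp add: algebra_simps)
  then have "dA1 * b * dW0 * (- (b * a)) = - (dW1 * a) * (x1h * b) * D" using d1 d3 d5 DX by simp
  then have "dA1 * b * dW0 * (- (b * a)) = - (dW1 * a) * b * (x1h * D)" by (simp add: algebra_simps)
  then have "dA1 * b * dW0 * (- (b * a)) = - (dW1 * a) * b * (- (dA0 * b))" using d2 by simp
  then have "(a * b * b) * (dA1 * dW0 + dW1 * dA0) = 0" by algebra
  then have S: "dA1 * dW0 + dW1 * dA0 = 0" using a b by simp
  have "D * D = (dW0 * dA1 - dW1 * dA0) * (dW0 * dA1 - dW1 * dA0)" unfolding D_def ..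
  also have "\<dots> = (dA1 * dW0 + dW1 * dA0) * (dA1 * dW0 + dW1 * dA0) - 4 * dW0 * dW1 * (dA1 * dA0)"
    by algebra
  also have "\<dots> = 0" using S AA by simp
  finally show False using D0 by simp
qed

lemma alg_D:
  fixes dW0 dW1 dA0 dA1 x01 x11 x0h x1h a b :: complex
  assumes a: "a \<noteq> 0" and b: "b \<noteq> 0"
    and e1: "dW0 * x0h + dW1 * x1h = b" and e2: "dW0 * x01 + dW1 * x11 = 0"
    and e3: "dA0 * x0h + dA1 * x1h = 0" and e4: "dA0 * x01 + dA1 * x11 = a"
  shows "dW0 * dA1 - dW1 * dA0 \<noteq> 0"
proof -
  have "(dW0 * dA1 - dW1 * dA0) * (x01 * x1h - x11 * x0h) = (dW0 * x01 + dW1 * x11) * (dA0 * x0h + dA1 * x1h) - (dW0 * x0h + dW1 * x1h) * (dA0 * x01 + dA1 * x11)"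
    by algebra
  then have "(dW0 * dA1 - dW1 * dA0) * (x01 * x1h - x11 * x0h) = - (b * a)" using e1 e2 e3 e4 by simp
  then show ?thesis using a b by auto
qed

lemma alg_x0:
  fixes dW0 dW1 dA0 dA1 y0 y1 :: complex
  assumes "dW0 * dA1 - dW1 * dA0 \<noteq> 0" "dW0 * y0 + dW1 * y1 = 0" "dA0 * y0 + dA1 * y1 = 0"
  shows "y0 = 0"
proof -
  have "y0 * (dW0 * dA1 - dW1 * dA0) = dA1 * (dW0 * y0 + dW1 * y1) - dW1 * (dA0 * y0 + dA1 * y1)" by algebra
  then show ?thesis using assms by simp
qed

context
  fixes v :: "nat \<Rightarrow> complex^'n" and k i j h :: nat and a b :: complex and \<phi> :: "nat \<Rightarrow> complex^'n"
  assumes k2: "2 \<le> k" and kn: "k \<le> CARD('n) - 1"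
    and iR: "i \<in> {2..k}" and jR: "j \<in> {k+1..CARD('n)}" and hR: "h \<in> {2..CARD('n)}"
    and a0: "a \<noteq> 0" and b0: "b \<noteq> 0"
    and dual: "\<And>l m. l \<in> {1..CARD('n)} \<Longrightarrow> m \<in> {1..CARD('n)} \<Longrightarrow> dotv (\<phi> l) (v m) = (if l = m then 1 else 0)"
begin

lemma kN: "k < CARD('n)" using kn k2 by linarith

lemma lab: "1 \<in> {1..CARD('n)}" "i \<in> {1..CARD('n)}" "j \<in> {1..CARD('n)}" "h \<in> {1..CARD('n)}"
  using iR jR hR kN by auto

lemma labk: "u \<in> {1..k} \<Longrightarrow> u \<in> {1..CARD('n)}" using kN by auto

lemma SW: "(\<lambda>b. \<phi> ((\<lambda>u. u) b)) = \<phi>" by simp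

definition "AS = (\<lambda>u. if u = i then j else u)"
definition "BS = (\<lambda>u. if u = 1 then h else u)"
definition "ZS = (\<lambda>u. if u = 1 then h else if u = i then j else u)"

lemma img_id: "(\<lambda>u. u) ` {1..k} \<subseteq> {1..CARD('n)}" using kN by auto
lemma img_A: "AS ` {1..k} \<subseteq> {1..CARD('n)}" using kN jR by (auto simp: AS_def)
lemma img_B: "BS ` {1..k} \<subseteq> {1..CARD('n)}" using kN hR by (auto simp: BS_def)

lemma fam_id: "c \<in> {1..k} \<Longrightarrow> v c = v ((\<lambda>u. u) c)" by simp
lemma fam_A: "c \<in> {1..k} \<Longrightarrow> (v(i := v j)) c = v (AS c)" by (simp add: AS_def)
lemma fam_B: "c \<in> {1..k} \<Longrightarrow> (v(1 := v h)) c = v (BS c)" by (simp add: BS_def)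

lemma inj_A: "inj_on AS {1..k}" using jR by (auto simp: AS_def inj_on_def)

lemma D_W_W: "Dk k v \<phi> = 1"
  using Dk_label_one[OF dual fam_id img_id] by (simp add: inj_on_def)
lemma D_W_A: "Dk k v (\<lambda>b. \<phi> (AS b)) = 0"
  by (rule Dk_label_zero[OF dual fam_id img_id, of i]) (use iR jR img_A in \<open>auto simp: AS_def\<close>)
lemma D_A_W: "Dk k (v(i := v j)) \<phi> = 0"
  by (rule Dk_label_zero[OF dual fam_A img_A, of i "\<lambda>u. u"]) (use iR jR kN in \<open>auto simp: AS_def\<close>)
lemma D_A_A: "Dk k (v(i := v j)) (\<lambda>b. \<phi> (AS b)) = 1"
  by (rule Dk_label_one[OF dual fam_A img_A inj_A])
lemma D_B_W: "Dk k (v(1 := v h)) \<phi> = 0"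
  by (rule Dk_label_zero[OF dual fam_B img_B, of 1 "\<lambda>u. u"]) (use k2 hR in \<open>auto simp: BS_def\<close>)
lemma D_B_A: "Dk k (v(1 := v h)) (\<lambda>b. \<phi> (AS b)) = 0"
  by (rule Dk_label_zero[OF dual fam_B img_B, of 1 AS]) (use k2 hR iR in \<open>auto simp: BS_def AS_def\<close>)

lemma dl: "l \<in> {1..CARD('n)} \<Longrightarrow> m \<in> {1..CARD('n)} \<Longrightarrow> dotv (\<phi> l) (v m) = (if l = m then 1 else 0)"
  by (rule dual)

lemma tW: "l \<in> {1..CARD('n)} \<Longrightarrow> Ck k (tT k v a b i j h) (PsiL \<phi> k (\<lambda>u. u) l) = b * (if l = h then 1 else 0)"
  unfolding Ck_tT using D_W_W D_A_W D_B_W dual[of l h] lab by simp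

lemma tA: "l \<in> {1..CARD('n)} \<Longrightarrow> Ck k (tT k v a b i j h) (PsiL \<phi> k AS l) = a * (if l = 1 then 1 else 0)"
  unfolding Ck_tT using D_W_A D_A_A D_B_A dual[of l 1] lab by simp

lemma LB2:
  fixes r :: nat
  assumes r: "r < 2" and t: "tT k v a b i j h = (\<lambda>I. \<Sum>m<r. rk1 k (ws m) I)"
  shows False
proof -
  have e: "\<And>S l. Ck k (tT k v a b i j h) (PsiL \<phi> k S l) = (\<Sum>m<r. Dk k (ws m) (\<lambda>b. \<phi> (S b)) * dotv (\<phi> l) (ws m 1))"
    using Ck_sum_rk1[OF t] .
  have h1: "h \<noteq> 1" using hR by auto
  consider "r = 0" | "r = 1" using r by linarith
  then show False
  proof cases
    case 1
    then show False using e[of "\<lambda>u. u" h] tW[OF lab(4)] b0 by simp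
  next
    case 2
    have w1: "Dk k (ws 0) \<phi> * dotv (\<phi> h) (ws 0 1) = b" using e[of "\<lambda>u. u" h] tW[OF lab(4)] 2 by simp
    have w2: "Dk k (ws 0) \<phi> * dotv (\<phi> 1) (ws 0 1) = 0" using e[of "\<lambda>u. u" 1] tW[OF lab(1)] 2 h1 by simp
    have a1: "Dk k (ws 0) (\<lambda>b. \<phi> (AS b)) * dotv (\<phi> 1) (ws 0 1) = a" using e[of AS 1] tA[OF lab(1)] 2 by simp
    have a2: "Dk k (ws 0) (\<lambda>b. \<phi> (AS b)) * dotv (\<phi> h) (ws 0 1) = 0" using e[of AS h] tA[OF lab(4)] 2 h1 by simp
    have "b * a = (Dk k (ws 0) \<phi> * dotv (\<phi> 1) (ws 0 1)) * (Dk k (ws 0) (\<lambda>b. \<phi> (AS b)) * dotv (\<phi> h) (ws 0 1))"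
      unfolding w1[symmetric] a1[symmetric] by (simp add: algebra_simps)
    also have "\<dots> = 0" using w2 by simp
    finally show False using a0 b0 by simp
  qed
qed

lemma i1: "i \<noteq> 1" and iK: "i \<in> {1..k}" and oneK: "1 \<in> {1..k}" and ij: "i \<noteq> j" and j1: "j \<noteq> 1"
  using iR jR k2 by auto

lemma dual': "l \<in> {1..k} \<Longrightarrow> m \<in> {1..CARD('n)} \<Longrightarrow> dotv (\<phi> l) (v m) = (if l = m then 1 else 0)"
  using dual labk by blast

lemma UB1:
  assumes hk: "h \<in> {2..k}"
  shows "\<exists>ws :: nat \<Rightarrow> nat \<Rightarrow> complex^'n. (\<forall>m<(2::nat). indep_fam k (ws m)) \<and> tT k v a b i j h = (\<lambda>I. \<Sum>m<(2::nat). rk1 k (ws m) I)"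
proof -
  define w0 where "w0 = v(i := a *s v j - v i)"
  define w1 where "w1 = v(1 := v 1 + b *s v h)"
  have hK: "h \<in> {1..k}" "h \<noteq> 1" using hk by auto
  have B0: "wedge k (v(1 := v h)) I = 0" for I
    by (rule wedge_eq0[OF oneK hK(1) hK(2)[symmetric]]) (use hK in simp)
  have W0: "wedge k w0 I = a * wedge k (v(i := v j)) I - wedge k v I" for I
    unfolding w0_def wedge_diff[OF iK] wedge_smult[OF iK] by simp
  have W1: "wedge k w1 I = wedge k v I" for I
    unfolding w1_def wedge_add[OF oneK] wedge_smult[OF oneK] B0 by simp
  define ws where "ws = (\<lambda>m::nat. if m = 0 then w0 else w1)"
  have T: "tT k v a b i j h = (\<lambda>I. \<Sum>m<2. rk1 k (ws m) I)"
  proof (rule ext)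
    fix I
    have "w0 1 = v 1" "w1 1 = v 1 + b *s v h" using i1 by (auto simp: w0_def w1_def)
    moreover have "wedge k (v(Suc 0 := v h)) I = 0" using B0 by simp
    ultimately show "tT k v a b i j h I = (\<Sum>m<2. rk1 k (ws m) I)"
      by (simp add: tT_def rk1_def tens_def ws_def numeral_2_eq_2 W0 W1 algebra_simps)
  qed
  have I0: "indep_fam k w0"
  proof (rule indep_diag[where \<psi> = "\<lambda>u. \<phi> (AS u)" and d = "\<lambda>u. if u = i then a else 1"])
    fix u c assume u: "u \<in> {1..k}" and c: "c \<in> {1..k}"
    have AS: "AS u \<in> {1..CARD('n)}" using img_A u by blast
    have cN: "c \<in> {1..CARD('n)}" using labk[OF c] .
    have e1: "AS u = j \<longleftrightarrow> u = i" "AS u \<noteq> i" "AS u = c \<longleftrightarrow> (u = c \<and> u \<noteq> i)"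
      using u c jR ij by (auto simp: AS_def)
    show "dotv (\<phi> (AS u)) (w0 c) = (if u = c then if u = i then a else 1 else 0)"
      using dual[OF AS lab(3)] dual[OF AS lab(2)] dual[OF AS cN] e1
      by (cases "c = i") (auto simp: w0_def dotv_diff2 dotv_scale2)
  qed (use a0 in auto)
  have I1: "indep_fam k w1"
  proof (rule indep_diag[where \<psi> = "\<lambda>u. if u = h then \<phi> h - b *s \<phi> 1 else \<phi> u" and d = "\<lambda>u. 1"])
    fix u c assume u: "u \<in> {1..k}" and c: "c \<in> {1..k}"
    have uN: "u \<in> {1..CARD('n)}" using labk[OF u] .
    have cN: "c \<in> {1..CARD('n)}" using labk[OF c] .
    show "dotv (if u = h then \<phi> h - b *s \<phi> 1 else \<phi> u) (w1 c) = (if u = c then 1 else 0)"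
      using dual[OF uN lab(1)] dual[OF uN lab(4)] dual[OF uN cN] dual[OF lab(4) lab(1)] dual[OF lab(4) cN]
        dual[OF lab(1) lab(4)] dual[OF lab(1) cN] dual[OF lab(4) lab(4)] dual[OF lab(1) lab(1)] hK
      by (cases "c = 1"; cases "u = h") (auto simp: w1_def dotv_add2 dotv_scale2 dotv_diff1 dotv_scale1)
  qed simp
  show ?thesis using T I0 I1 by (intro exI[of _ ws]) (auto simp: ws_def)
qed

lemma UB3:
  assumes hj: "h = j"
  shows "\<exists>ws :: nat \<Rightarrow> nat \<Rightarrow> complex^'n. (\<forall>m<(2::nat). indep_fam k (ws m)) \<and> tT k v a b i j h = (\<lambda>I. \<Sum>m<(2::nat). rk1 k (ws m) I)"
proof -
  define s where "s = b / 2"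
  define r where "r = a / 2"
  have bs: "b = 2 * s" and ar: "a = 2 * r" by (simp_all add: s_def r_def)
  define U0 where "U0 = v(1 := v 1 + s *s v j)"
  define U1 where "U1 = v(1 := v 1 - s *s v j)"
  define w0 where "w0 = U0(i := v i + r *s v j)"
  define w1 where "w1 = U1(i := r *s v j - v i)"
  have XA: "wedge k ((v(i := v j))(1 := v j)) I = 0" for I
    by (rule wedge_eq0[OF oneK iK i1[symmetric]]) (use i1 in simp)
  have vt: "(v(i := v j))(1 := v 1) = v(i := v j)" using i1 by (auto simp: fun_eq_iff)
  have WU0: "wedge k U0 I = wedge k v I + s * wedge k (v(1 := v j)) I" for I
    unfolding U0_def wedge_add[OF oneK] wedge_smult[OF oneK] by simp
  have WU1: "wedge k U1 I = wedge k v I - s * wedge k (v(1 := v j)) I" for I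
    unfolding U1_def wedge_diff[OF oneK] wedge_smult[OF oneK] by simp
  have WU0i: "wedge k (U0(i := v j)) I = wedge k (v(i := v j)) I" for I
  proof -
    have eq: "U0(i := v j) = (v(i := v j))(1 := v 1 + s *s v j)" unfolding U0_def using i1 by (auto simp: fun_eq_iff)
    show ?thesis unfolding eq wedge_add[OF oneK] wedge_smult[OF oneK] vt XA by simp
  qed
  have WU1i: "wedge k (U1(i := v j)) I = wedge k (v(i := v j)) I" for I
  proof -
    have eq: "U1(i := v j) = (v(i := v j))(1 := v 1 - s *s v j)" unfolding U1_def using i1 by (auto simp: fun_eq_iff)
    show ?thesis unfolding eq wedge_diff[OF oneK] wedge_smult[OF oneK] vt XA by simp
  qed
  have U0i: "U0(i := v i) = U0" and U1i: "U1(i := v i) = U1" using i1 by (auto simp: fun_eq_iff U0_def U1_def)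
  have W0: "wedge k w0 I = wedge k v I + s * wedge k (v(1 := v j)) I + r * wedge k (v(i := v j)) I" for I
    unfolding w0_def wedge_add[OF iK] wedge_smult[OF iK] U0i WU0 WU0i by simp
  have W1: "wedge k w1 I = r * wedge k (v(i := v j)) I - (wedge k v I - s * wedge k (v(1 := v j)) I)" for I
    unfolding w1_def wedge_diff[OF iK] wedge_smult[OF iK] U1i WU1 WU1i by simp
  define ws where "ws = (\<lambda>m::nat. if m = 0 then w0 else w1)"
  have T: "tT k v a b i j h = (\<lambda>I. \<Sum>m<(2::nat). rk1 k (ws m) I)"
  proof (rule ext)
    fix I :: "nat \<Rightarrow> 'n"
    define e where "e = I (Suc k)"
    have w01: "w0 1 = v 1 + s *s v j" and w11: "w1 1 = v 1 - s *s v j" using i1 by (auto simp: w0_def w1_def U0_def U1_def)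
    have R: "(\<Sum>m<2. rk1 k (ws m) I) = wedge k w0 I * (w0 1) $ e + wedge k w1 I * (w1 1) $ e"
      by (simp add: rk1_def tens_def ws_def numeral_2_eq_2 e_def)
    have L: "tT k v a b i j h I = a * (wedge k (v(i := v j)) I * v 1 $ e) + b * (wedge k v I * v j $ e + wedge k (v(1 := v j)) I * v 1 $ e)"
      by (simp add: tT_def tens_def e_def hj)
    show "tT k v a b i j h I = (\<Sum>m<2. rk1 k (ws m) I)"
      unfolding R L W0 W1 w01 w11 vector_add_component vector_minus_component vector_smult_component unfolding bs ar by algebra
  qed
  have I0: "indep_fam k w0"
  proof (rule indep_diag[where \<psi> = "\<phi>" and d = "\<lambda>u. 1"])
    fix u c assume u: "u \<in> {1..k}" and c: "c \<in> {1..k}"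
    have cN: "c \<in> {1..CARD('n)}" using labk[OF c] .
    have uj: "u \<noteq> j" using u jR by auto
    show "dotv (\<phi> u) (w0 c) = (if u = c then 1 else 0)"
      using dual'[OF u lab(3)] dual'[OF u lab(2)] dual'[OF u lab(1)] dual'[OF u cN] uj i1
      by (cases "c = i"; cases "c = 1") (auto simp: w0_def U0_def dotv_add2 dotv_scale2)
  qed simp
  have I1: "indep_fam k w1"
  proof (rule indep_diag[where \<psi> = "\<phi>" and d = "\<lambda>u. if u = i then -1 else 1"])
    fix u c assume u: "u \<in> {1..k}" and c: "c \<in> {1..k}"
    have cN: "c \<in> {1..CARD('n)}" using labk[OF c] .
    have uj: "u \<noteq> j" using u jR by auto
    show "dotv (\<phi> u) (w1 c) = (if u = c then if u = i then -1 else 1 else 0)"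
      using dual'[OF u lab(3)] dual'[OF u lab(2)] dual'[OF u lab(1)] dual'[OF u cN] uj i1
      by (cases "c = i"; cases "c = 1") (auto simp: w1_def U1_def dotv_diff2 dotv_scale2)
  qed simp
  show ?thesis using T I0 I1 by (intro exI[of _ ws]) (auto simp: ws_def)
qed

lemma img_Z: "ZS ` {1..k} \<subseteq> {1..CARD('n)}" using kN jR hR by (auto simp: ZS_def)

context
  assumes hk: "k < h" and hj: "h \<noteq> j"
begin

lemma inj_B: "inj_on BS {1..k}" using hk by (auto simp: BS_def inj_on_def)

lemma D_W_B: "Dk k v (\<lambda>b. \<phi> (BS b)) = 0"
  by (rule Dk_label_zero[OF dual fam_id img_id, of 1 BS]) (use hk k2 lab in \<open>auto simp: BS_def\<close>)
lemma D_A_B: "Dk k (v(i := v j)) (\<lambda>b. \<phi> (BS b)) = 0"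
  by (rule Dk_label_zero[OF dual fam_A img_A, of 1 BS]) (use hk hj k2 lab in \<open>auto simp: BS_def AS_def\<close>)
lemma D_B_B: "Dk k (v(1 := v h)) (\<lambda>b. \<phi> (BS b)) = 1"
  by (rule Dk_label_one[OF dual fam_B img_B inj_B])
lemma D_W_Z: "Dk k v (\<lambda>b. \<phi> (ZS b)) = 0"
  by (rule Dk_label_zero[OF dual fam_id img_id, of 1 ZS]) (use hk k2 lab in \<open>auto simp: ZS_def\<close>)
lemma D_A_Z: "Dk k (v(i := v j)) (\<lambda>b. \<phi> (ZS b)) = 0"
  by (rule Dk_label_zero[OF dual fam_A img_A, of 1 ZS]) (use hk hj k2 lab in \<open>auto simp: ZS_def AS_def\<close>)
lemma D_B_Z: "Dk k (v(1 := v h)) (\<lambda>b. \<phi> (ZS b)) = 0"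
  by (rule Dk_label_zero[OF dual fam_B img_B, of i ZS]) (use hk hj iR jR lab in \<open>auto simp: ZS_def BS_def\<close>)

lemma tB: "l \<in> {1..CARD('n)} \<Longrightarrow> Ck k (tT k v a b i j h) (PsiL \<phi> k BS l) = b * (if l = 1 then 1 else 0)"
  unfolding Ck_tT using D_W_B D_A_B D_B_B dual[of l 1] lab by simp

lemma tZ: "Ck k (tT k v a b i j h) (PsiL \<phi> k ZS l) = 0"
  unfolding Ck_tT using D_W_Z D_A_Z D_B_Z by simp

lemma UB2:
  shows "\<exists>ws :: nat \<Rightarrow> nat \<Rightarrow> complex^'n. (\<forall>m<(3::nat). indep_fam k (ws m)) \<and> tT k v a b i j h = (\<lambda>I. \<Sum>m<(3::nat). rk1 k (ws m) I)"
proof -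
  define s where "s = b / 2"
  have bs: "b = 2 * s" by (simp add: s_def)
  define U2 where "U2 = v(1 := v 1 - s *s v h)"
  define w0 where "w0 = v(i := a *s v j)"
  define w1 where "w1 = v(1 := v 1 + s *s v h)"
  define w2 where "w2 = U2(i := - v i)"
  have U2i: "U2(i := v i) = U2" using i1 by (auto simp: fun_eq_iff U2_def)
  have W0: "wedge k w0 I = a * wedge k (v(i := v j)) I" for I
    unfolding w0_def wedge_smult[OF iK] ..
  have W1: "wedge k w1 I = wedge k v I + s * wedge k (v(1 := v h)) I" for I
    unfolding w1_def wedge_add[OF oneK] wedge_smult[OF oneK] by simp
  have W2: "wedge k w2 I = - (wedge k v I - s * wedge k (v(1 := v h)) I)" for I
    unfolding w2_def wedge_neg[OF iK] U2i unfolding U2_def wedge_diff[OF oneK] wedge_smult[OF oneK] by simp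
  define ws where "ws = (\<lambda>m::nat. if m = 0 then w0 else if m = 1 then w1 else w2)"
  have T: "tT k v a b i j h = (\<lambda>I. \<Sum>m<(3::nat). rk1 k (ws m) I)"
  proof (rule ext)
    fix I :: "nat \<Rightarrow> 'n"
    define e where "e = I (Suc k)"
    have w01: "w0 1 = v 1" and w11: "w1 1 = v 1 + s *s v h" and w21: "w2 1 = v 1 - s *s v h"
      using i1 by (auto simp: w0_def w1_def w2_def U2_def)
    have R: "(\<Sum>m<3. rk1 k (ws m) I) = wedge k w0 I * (w0 1) $ e + wedge k w1 I * (w1 1) $ e + wedge k w2 I * (w2 1) $ e"
      by (simp add: rk1_def tens_def ws_def numeral_3_eq_3 e_def)
    have L: "tT k v a b i j h I = a * (wedge k (v(i := v j)) I * v 1 $ e) + b * (wedge k v I * v h $ e + wedge k (v(1 := v h)) I * v 1 $ e)"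
      by (simp add: tT_def tens_def e_def)
    show "tT k v a b i j h I = (\<Sum>m<3. rk1 k (ws m) I)"
      unfolding R L W0 W1 W2 w01 w11 w21 vector_add_component vector_minus_component vector_smult_component unfolding bs by algebra
  qed
  have hnk: "h \<notin> {1..k}" using hk by auto
  have I0: "indep_fam k w0"
  proof (rule indep_diag[where \<psi> = "\<lambda>u. \<phi> (AS u)" and d = "\<lambda>u. if u = i then a else 1"])
    fix u c assume u: "u \<in> {1..k}" and c: "c \<in> {1..k}"
    have AS: "AS u \<in> {1..CARD('n)}" using img_A u by blast
    have cN: "c \<in> {1..CARD('n)}" using labk[OF c] .
    have e1: "AS u = j \<longleftrightarrow> u = i" "AS u = c \<longleftrightarrow> (u = c \<and> u \<noteq> i)"
      using u c jR ij by (auto simp: AS_def)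
    show "dotv (\<phi> (AS u)) (w0 c) = (if u = c then if u = i then a else 1 else 0)"
      using dual[OF AS lab(3)] dual[OF AS cN] e1
      by (cases "c = i") (auto simp: w0_def dotv_scale2)
  qed (use a0 in auto)
  have I1: "indep_fam k w1"
  proof (rule indep_diag[where \<psi> = "\<phi>" and d = "\<lambda>u. 1"])
    fix u c assume u: "u \<in> {1..k}" and c: "c \<in> {1..k}"
    have cN: "c \<in> {1..CARD('n)}" using labk[OF c] .
    have uh: "u \<noteq> h" using u hnk by auto
    show "dotv (\<phi> u) (w1 c) = (if u = c then 1 else 0)"
      using dual'[OF u lab(4)] dual'[OF u lab(1)] dual'[OF u cN] uh
      by (cases "c = 1") (auto simp: w1_def dotv_add2 dotv_scale2)
  qed simp
  have I2: "indep_fam k w2"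
  proof (rule indep_diag[where \<psi> = "\<phi>" and d = "\<lambda>u. if u = i then -1 else 1"])
    fix u c assume u: "u \<in> {1..k}" and c: "c \<in> {1..k}"
    have cN: "c \<in> {1..CARD('n)}" using labk[OF c] .
    have uh: "u \<noteq> h" using u hnk by auto
    show "dotv (\<phi> u) (w2 c) = (if u = c then if u = i then -1 else 1 else 0)"
      using dual'[OF u lab(4)] dual'[OF u lab(1)] dual'[OF u lab(2)] dual'[OF u cN] uh i1
      by (cases "c = i"; cases "c = 1") (auto simp: w2_def U2_def dotv_diff2 dotv_neg2 dotv_scale2)
  qed simp
  show ?thesis using T I0 I1 I2 by (intro exI[of _ ws]) (auto simp: ws_def numeral_3_eq_3 less_Suc_eq)
qed

lemma LB3:
  fixes r :: nat
  assumes r: "r < 3" and t: "tT k v a b i j h = (\<lambda>I. \<Sum>m<r. rk1 k (ws m) I)"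
  shows False
proof (cases "r < 2")
  case True
  show False by (rule LB2[OF True t])
next
  case False
  then have r2: "r = 2" using r by linarith
  define d where "d S m = Dk k (ws m) (\<lambda>b. \<phi> (S b))" for S m
  define x where "x m l = dotv (\<phi> l) (ws m 1)" for m l
  have e: "Ck k (tT k v a b i j h) (PsiL \<phi> k S l) = d S 0 * x 0 l + d S 1 * x 1 l" for S l
    using Ck_sum_rk1[OF t, of \<phi> S l] r2 by (simp add: d_def x_def numeral_2_eq_2)
  have h1: "h \<noteq> 1" using hR by auto
  have e1: "d (\<lambda>u. u) 0 * x 0 h + d (\<lambda>u. u) 1 * x 1 h = b" using e[of "\<lambda>u. u" h] tW[OF lab(4)] by simp
  have e2: "d (\<lambda>u. u) 0 * x 0 1 + d (\<lambda>u. u) 1 * x 1 1 = 0" using e[of "\<lambda>u. u" 1] tW[OF lab(1)] h1 by simp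
  have e3: "d AS 0 * x 0 h + d AS 1 * x 1 h = 0" using e[of AS h] tA[OF lab(4)] h1 by simp
  have e4: "d AS 0 * x 0 1 + d AS 1 * x 1 1 = a" using e[of AS 1] tA[OF lab(1)] by simp
  have e5: "d BS 0 * x 0 1 + d BS 1 * x 1 1 = b" using e[of BS 1] tB[OF lab(1)] by simp
  have e6: "d BS 0 * x 0 h + d BS 1 * x 1 h = 0" using e[of BS h] tB[OF lab(4)] h1 by simp
  have e7: "d ZS 0 * x 0 1 + d ZS 1 * x 1 1 = 0" using e[of ZS 1] tZ by simp
  have e8: "d ZS 0 * x 0 h + d ZS 1 * x 1 h = 0" using e[of ZS h] tZ by simp
  have Dn: "d (\<lambda>u. u) 0 * d AS 1 - d (\<lambda>u. u) 1 * d AS 0 \<noteq> 0"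
    by (rule alg_D[OF a0 b0 e1 e2 e3 e4])
  have xz: "x 0 l = 0" if l: "l \<in> {1..CARD('n)}" "l \<noteq> 1" "l \<noteq> h" for l
  proof (rule alg_x0[OF Dn])
    show "d (\<lambda>u. u) 0 * x 0 l + d (\<lambda>u. u) 1 * x 1 l = 0" using e[of "\<lambda>u. u" l] tW[OF l(1)] l by simp
    show "d AS 0 * x 0 l + d AS 1 * x 1 l = 0" using e[of AS l] tA[OF l(1)] l by simp
  qed
  have k1: "1 \<le> k" using k2 by simp
  have H1: "x 0 h * d (\<lambda>u. u) 0 = x 0 1 * d BS 0"
  proof -
    have "x 0 h * d (\<lambda>u. u) 0 = (\<Sum>c\<in>{1..k}. dotv (\<phi> c) (ws 0 1) * Dk k (ws 0) (\<phi>(c := \<phi> h)))"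
      using hook_id[OF k1, of "\<phi> h" "ws 0" \<phi>] by (simp add: x_def d_def)
    also have "\<dots> = dotv (\<phi> 1) (ws 0 1) * Dk k (ws 0) (\<phi>(1 := \<phi> h))"
    proof (rule sum_single1[OF k1])
      fix c assume c: "c \<in> {1..k}" "c \<noteq> 1"
      have "x 0 c = 0" by (rule xz) (use c hk labk[OF c(1)] in auto)
      then show "dotv (\<phi> c) (ws 0 1) * Dk k (ws 0) (\<phi>(c := \<phi> h)) = 0" by (simp add: x_def)
    qed
    also have "\<phi>(1 := \<phi> h) = (\<lambda>b. \<phi> (BS b))" by (auto simp: BS_def)
    finally show ?thesis by (simp add: x_def d_def)
  qed
  have H2: "x 0 h * d AS 0 = x 0 1 * d ZS 0"
  proof -
    have "x 0 h * d AS 0 = (\<Sum>c\<in>{1..k}. dotv (\<phi> (AS c)) (ws 0 1) * Dk k (ws 0) ((\<lambda>b. \<phi> (AS b))(c := \<phi> h)))"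
      using hook_id[OF k1, of "\<phi> h" "ws 0" "\<lambda>b. \<phi> (AS b)"] by (simp add: x_def d_def)
    also have "\<dots> = dotv (\<phi> (AS 1)) (ws 0 1) * Dk k (ws 0) ((\<lambda>b. \<phi> (AS b))(1 := \<phi> h))"
    proof (rule sum_single1[OF k1])
      fix c assume c: "c \<in> {1..k}" "c \<noteq> 1"
      have "x 0 (AS c) = 0" by (rule xz) (use c hk hj iR jR labk[OF c(1)] in \<open>auto simp: AS_def\<close>)
      then show "dotv (\<phi> (AS c)) (ws 0 1) * Dk k (ws 0) ((\<lambda>b. \<phi> (AS b))(c := \<phi> h)) = 0" by (simp add: x_def)
    qed
    also have "(\<lambda>b. \<phi> (AS b))(1 := \<phi> h) = (\<lambda>b. \<phi> (ZS b))" by (auto simp: ZS_def AS_def)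
    also have "AS 1 = 1" using iR by (simp add: AS_def)
    finally show ?thesis by (simp add: x_def d_def)
  qed
  show False by (rule alg3[OF a0 b0 e1 e2 e3 e4 e5 e6 e7 e8 H1 H2])
qed

end

end

theorem mainTheorem13:
  fixes v :: "nat \<Rightarrow> complex^'n" and k i j h :: nat and a b :: complex
  assumes "2 \<le> k" and "k \<le> CARD('n) - 1"
    and "inj_on v {1..CARD('n)}" and "vec.independent (v ` {1..CARD('n)})"
    and "i \<in> {2..k}" and "j \<in> {k+1..CARD('n)}" and "h \<in> {2..CARD('n)}"
    and "a \<noteq> 0" and "b \<noteq> 0"
  shows "(h \<in> {2..k} \<longrightarrow> hook_rank k (tT k v a b i j h) = 2)
       \<and> (h \<in> {k+1..CARD('n)} \<and> h \<noteq> j \<longrightarrow> hook_rank k (tT k v a b i j h) = 3)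
       \<and> (h = j \<longrightarrow> hook_rank k (tT k v a b i j h) = 2)"
proof -
  obtain \<phi> where dual0: "\<forall>l\<in>{1..CARD('n)}. \<forall>m\<in>{1..CARD('n)}. dotv (\<phi> l) (v m) = (if l = m then 1 else 0)"
    using dual_basis[OF assms(3,4)] by blast
  have dual: "\<And>l m. l \<in> {1..CARD('n)} \<Longrightarrow> m \<in> {1..CARD('n)} \<Longrightarrow> dotv (\<phi> l) (v m) = (if l = m then 1 else 0)"
    using dual0 by blast
  note hyp = assms(1,2,5,6,7,8,9) dual
  show ?thesis
  proof (intro conjI impI)
    assume hk: "h \<in> {2..k}"
    show "hook_rank k (tT k v a b i j h) = 2"
    proof (rule rank_eqI[OF UB1[OF hyp hk]])
      fix r' :: nat and ws :: "nat \<Rightarrow> nat \<Rightarrow> complex^'n"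
      assume r: "r' < 2" and "\<forall>m<r'. indep_fam k (ws m)" and t: "tT k v a b i j h = (\<lambda>I. \<Sum>m<r'. rk1 k (ws m) I)"
      show False by (rule LB2[OF hyp r t])
    qed
  next
    assume hk: "h \<in> {k+1..CARD('n)} \<and> h \<noteq> j"
    then have hk1: "k < h" and hj: "h \<noteq> j" by auto
    show "hook_rank k (tT k v a b i j h) = 3"
    proof (rule rank_eqI[OF UB2[OF hyp hk1 hj]])
      fix r' :: nat and ws :: "nat \<Rightarrow> nat \<Rightarrow> complex^'n"
      assume r: "r' < 3" and "\<forall>m<r'. indep_fam k (ws m)" and t: "tT k v a b i j h = (\<lambda>I. \<Sum>m<r'. rk1 k (ws m) I)"
      show False by (rule LB3[OF hyp hk1 hj r t])
    qed
  next
    assume hj: "h = j"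
    show "hook_rank k (tT k v a b i j h) = 2"
    proof (rule rank_eqI[OF UB3[OF hyp hj]])
      fix r' :: nat and ws :: "nat \<Rightarrow> nat \<Rightarrow> complex^'n"
      assume r: "r' < 2" and "\<forall>m<r'. indep_fam k (ws m)" and t: "tT k v a b i j h = (\<lambda>I. \<Sum>m<r'. rk1 k (ws m) I)"
      show False by (rule LB2[OF hyp r t])
    qed
  qed
qed

end
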